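(* Let $c>0$, $\sigma_j=j^{-c}$, $j\ge1$, and $\mathcal{K}(\sigma)=\{\sigma_je_j\}_{j=1}^\infty\cup\{0\}\subset c_0$. Then $\tilde\varepsilon_n(\mathcal{K}(\sigma))_{c_0}\asymp2^{-cn}$, and for every $\gamma>2$ there is $n_1$, depending only on $\gamma$ and $c$, such that $d_n^\gamma(\mathcal{K}(\sigma))_{c_0}=0$ for all $n\ge n_1$.
   Context: $c_0$ denotes the Banach space of real sequences converging to $0$ with the norm $\|x\|=\sup_j|x_j|$, and $(e_j)$ is its standard unit vector basis. $a_n\asymp b_n$ means there are constants $0<c'\le C'$ independent of $n$ with $c'b_n\le a_n\le C'b_n$. The inner entropy number $\tilde\varepsilon_n(\mathcal{K})_{c_0}$ is the infimum of all $\varepsilon>0$ such that $\mathcal{K}$ is covered by $2^n$ closed balls of radius $\varepsilon$ with centers in $\mathcal{K}$. For $k\ge1$ and a norm $\|\cdot\|_{Y_k}$ on $\mathbb{R}^k$ let $B_{Y_k}=\{y\in\mathbb{R}^k:\|y\|_{Y_k}\le1\}$; $d^\gamma(\mathcal{K},Y_k)_{c_0}=\inf_{\Phi}\sup_{f\in\mathcal{K}}\inf_{y\in B_{Y_k}}\|f-\Phi(y)\|$, the infimum over all maps $\Phi:B_{Y_k}\to c_0$ with $\|\Phi(y)-\Phi(y')\|\le\gamma\|y-y'\|_{Y_k}$; and $d_n^\gamma(\mathcal{K})_{c_0}=\inf_{1\le k\le n}\inf_{\|\cdot\|_{Y_k}}d^\gamma(\mathcal{K},Y_k)_{c_0}$,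 the inner infimum over all norms on $\mathbb{R}^k$. *)

theory Defs
  imports "HOL-Analysis.Analysis"
begin

text \<open>The space c_0: real sequences indexed by the positive integers j \<ge> 1,
  represented as functions nat \<Rightarrow> real whose unused coordinate 0 is zero,
  converging to 0, with the sup norm.\<close>

definition c0 :: "(nat \<Rightarrow> real) set" where
  "c0 = {x. x 0 = 0 \<and> x \<longlonglongrightarrow> 0}"

definition c0_norm :: "(nat \<Rightarrow> real) \<Rightarrow> real" where
  "c0_norm x = (SUP j. \<bar>x j\<bar>)"

definition c0_dist :: "(nat \<Rightarrow> real) \<Rightarrow> (nat \<Rightarrow> real) \<Rightarrow> real" where
  "c0_dist x y = c0_norm (\<lambda>j. x j - y j)"

definition unit_vec :: "nat \<Rightarrow> nat \<Rightarrow> real" where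
  "unit_vec j = (\<lambda>i. if i = j then 1 else 0)"

definition Kset :: "(nat \<Rightarrow> real) \<Rightarrow> (nat \<Rightarrow> real) set" where
  "Kset \<sigma> = {(\<lambda>i. \<sigma> j * unit_vec j i) | j. j \<ge> 1} \<union> {(\<lambda>i. 0)}"

definition inner_entropy :: "nat \<Rightarrow> (nat \<Rightarrow> real) set \<Rightarrow> real" where
  "inner_entropy n K = Inf {\<epsilon>. \<epsilon> > 0 \<and> (\<exists>C. C \<subseteq> K \<and> finite C \<and> card C \<le> 2 ^ n \<and>
        (\<forall>f\<in>K. \<exists>c\<in>C. c0_dist f c \<le> \<epsilon>))}"

text \<open>R^k is represented as the vectors y :: nat \<Rightarrow> real with y i = 0 for i \<ge> k.\<close>
definition Rk :: "nat \<Rightarrow> (nat \<Rightarrow> real) set" where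
  "Rk k = {y. \<forall>i\<ge>k. y i = 0}"

definition is_norm_on_Rk :: "nat \<Rightarrow> ((nat \<Rightarrow> real) \<Rightarrow> real) \<Rightarrow> bool" where
  "is_norm_on_Rk k N \<longleftrightarrow>
     (\<forall>x\<in>Rk k. N x \<ge> 0) \<and>
     (\<forall>x\<in>Rk k. N x = 0 \<longleftrightarrow> x = (\<lambda>i. 0)) \<and>
     (\<forall>x\<in>Rk k. \<forall>a::real. N (\<lambda>i. a * x i) = \<bar>a\<bar> * N x) \<and>
     (\<forall>x\<in>Rk k. \<forall>y\<in>Rk k. N (\<lambda>i. x i + y i) \<le> N x + N y)"

definition unit_ball_Rk :: "nat \<Rightarrow> ((nat \<Rightarrow> real) \<Rightarrow> real) \<Rightarrow> (nat \<Rightarrow> real) set" where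
  "unit_ball_Rk k N = {y \<in> Rk k. N y \<le> 1}"

definition lip_width_k ::
  "real \<Rightarrow> (nat \<Rightarrow> real) set \<Rightarrow> nat \<Rightarrow> ((nat \<Rightarrow> real) \<Rightarrow> real) \<Rightarrow> real" where
  "lip_width_k \<gamma> K k N = Inf {(SUP f\<in>K. INF y\<in>unit_ball_Rk k N. c0_dist f (\<Phi> y)) | \<Phi>.
      (\<forall>y\<in>unit_ball_Rk k N. \<Phi> y \<in> c0) \<and>
      (\<forall>y\<in>unit_ball_Rk k N. \<forall>y'\<in>unit_ball_Rk k N.
          c0_dist (\<Phi> y) (\<Phi> y') \<le> \<gamma> * N (\<lambda>i. y i - y' i))}"

definition lip_width :: "real \<Rightarrow> nat \<Rightarrow> (nat \<Rightarrow> real) set \<Rightarrow> real" where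
  "lip_width \<gamma> n K = Inf {lip_width_k \<gamma> K k N | k N. 1 \<le> k \<and> k \<le> n \<and> is_norm_on_Rk k N}"

end

theory Submission
  imports Defs
begin


lemma c0_dist_ge:
  assumes "\<And>i. \<bar>x i\<bar> \<le> A" "\<And>i. \<bar>y i\<bar> \<le> B"
  shows "\<bar>x i - y i\<bar> \<le> c0_dist x y"
proof -
  have "bdd_above (range (\<lambda>j. \<bar>x j - y j\<bar>))"
    by (rule bdd_aboveI2[of _ _ "A+B"]) (metis abs_triangle_ineq4 add_mono order_trans assms)
  then show ?thesis unfolding c0_dist_def c0_norm_def by (rule cSUP_upper[OF UNIV_I])
qed

lemma c0_dist_nonneg:
  assumes "\<And>i. \<bar>x i\<bar> \<le> A" "\<And>i. \<bar>y i\<bar> \<le> B"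
  shows "0 \<le> c0_dist x y"
  using c0_dist_ge[of x A y B 0, OF assms] by linarith

lemma c0_dist_le:
  assumes "\<And>i. \<bar>x i - y i\<bar> \<le> A"
  shows "c0_dist x y \<le> A"
  unfolding c0_dist_def c0_norm_def by (rule cSUP_least) (use assms in auto)

lemma c0_dist_self: "c0_dist x x = 0"
  unfolding c0_dist_def c0_norm_def by simp

definition sig :: "real \<Rightarrow> nat \<Rightarrow> real" where "sig c j = real j powr (-c)"
definition kvec :: "real \<Rightarrow> nat \<Rightarrow> nat \<Rightarrow> real" where "kvec c j = (\<lambda>i. sig c j * unit_vec j i)"

lemma Kset_eq: "Kset (sig c) = kvec c ` {1..} \<union> {\<lambda>i. 0}"
  unfolding Kset_def kvec_def by auto

lemma sig_pos: "j \<ge> 1 \<Longrightarrow> 0 < sig c j" unfolding sig_def by simp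

lemma sig_le1: "c > 0 \<Longrightarrow> j \<ge> 1 \<Longrightarrow> sig c j \<le> 1"
  unfolding sig_def by (simp add: powr_minus_divide ge_one_powr_ge_zero)

lemma sig_anti: "c > 0 \<Longrightarrow> 1 \<le> i \<Longrightarrow> i \<le> j \<Longrightarrow> sig c j \<le> sig c i"
  unfolding sig_def by (simp add: powr_mono2')

lemma vec_bound: "c > 0 \<Longrightarrow> j \<ge> 1 \<Longrightarrow> \<bar>kvec c j i\<bar> \<le> 1"
  unfolding kvec_def unit_vec_def using sig_le1 sig_pos by (auto simp: less_imp_le)

lemma K_bound: "c > 0 \<Longrightarrow> f \<in> Kset (sig c) \<Longrightarrow> \<bar>f i\<bar> \<le> 1"
  unfolding Kset_eq using vec_bound by auto

lemma dist_vec0: "c > 0 \<Longrightarrow> j \<ge> 1 \<Longrightarrow> c0_dist (kvec c j) (\<lambda>i. 0) \<le> sig c j"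
  by (rule c0_dist_le) (auto simp: kvec_def unit_vec_def abs_mult sig_pos less_imp_le)

lemma dist_vec_ge: "c > 0 \<Longrightarrow> j \<ge> 1 \<Longrightarrow> f \<in> Kset (sig c) \<Longrightarrow> f \<noteq> kvec c j \<Longrightarrow> sig c j \<le> c0_dist (kvec c j) f"
proof -
  assume c: "c > 0" and j: "j \<ge> 1" and f: "f \<in> Kset (sig c)" "f \<noteq> kvec c j"
  have "f j = 0" using f unfolding Kset_eq kvec_def unit_vec_def by auto
  then have "sig c j = \<bar>kvec c j j - f j\<bar>" using sig_pos[OF j, of c] by (simp add: kvec_def unit_vec_def)
  also have "\<dots> \<le> c0_dist (kvec c j) f"
    by (rule c0_dist_ge[where A=1 and B=1]) (use vec_bound[OF c j] K_bound[OF c f(1)] in auto)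
  finally show ?thesis .
qed

lemma entropy_mem:
  assumes c: "c > 0"
  shows "2 powr (- c * real n) \<in> {\<epsilon>. \<epsilon> > 0 \<and> (\<exists>C. C \<subseteq> Kset (sig c) \<and> finite C \<and> card C \<le> 2 ^ n \<and>
        (\<forall>f\<in>Kset (sig c). \<exists>z\<in>C. c0_dist f z \<le> \<epsilon>))}"
proof -
  let ?C = "insert (\<lambda>i. 0) (kvec c ` {1..<2^n})"
  have "?C \<subseteq> Kset (sig c)" unfolding Kset_eq by auto
  moreover have "finite ?C" by simp
  moreover have "card ?C \<le> 2^n"
  proof -
    have "card ?C \<le> Suc (card (kvec c ` {1..<2^n}))" by (simp add: card_insert_le_m1)
    also have "\<dots> \<le> Suc (card {1..<(2::nat)^n})" using card_image_le by (metis Suc_le_mono finite_atLeastLessThan)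
    also have "\<dots> = 2^n" by simp
    finally show ?thesis .
  qed
  moreover have "\<forall>f\<in>Kset (sig c). \<exists>x\<in>?C. c0_dist f x \<le> 2 powr (- c * real n)"
  proof
    fix f assume "f \<in> Kset (sig c)"
    then consider "f = (\<lambda>i. 0)" | j where "j \<ge> 1" "f = kvec c j" unfolding Kset_eq by auto
    then show "\<exists>x\<in>?C. c0_dist f x \<le> 2 powr (- c * real n)"
    proof cases
      case 1 then show ?thesis by (auto simp: c0_dist_self)
    next
      case (2 j)
      show ?thesis
      proof (cases "j < 2^n")
        case True then show ?thesis using 2 by (intro bexI[of _ f]) (auto simp: c0_dist_self)
      next
        case False
        have "sig c j \<le> sig c (2^n)" using False 2 c by (intro sig_anti) auto
        also have "sig c (2^n) = 2 powr (- c * real n)" unfolding sig_def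
          by (simp add: powr_realpow[symmetric] powr_powr mult.commute)
        finally show ?thesis using dist_vec0[OF c 2(1)] 2 by (intro bexI[of _ "\<lambda>i. 0"]) auto
      qed
    qed
  qed
  ultimately have "\<exists>C. C \<subseteq> Kset (sig c) \<and> finite C \<and> card C \<le> 2 ^ n \<and>
        (\<forall>f\<in>Kset (sig c). \<exists>z\<in>C. c0_dist f z \<le> 2 powr (- c * real n))"
    by (intro exI[of _ ?C]) blast
  then have "2 powr (- c * real n) \<in> {\<epsilon>. \<epsilon> > 0 \<and> (\<exists>C. C \<subseteq> Kset (sig c) \<and> finite C \<and> card C \<le> 2 ^ n \<and>
        (\<forall>f\<in>Kset (sig c). \<exists>z\<in>C. c0_dist f z \<le> \<epsilon>))}" by simp
  then show ?thesis by simp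
qed

lemma entropy_upper:
  assumes c: "c > 0"
  shows "inner_entropy n (Kset (sig c)) \<le> 2 powr (- c * real n)"
  using entropy_mem[OF c] unfolding inner_entropy_def by (rule cInf_lower) (rule bdd_belowI[of _ 0], auto)

lemma kvec_inj: "inj_on (kvec c) {1..}"
proof (rule inj_onI)
  fix i j assume ij: "i \<in> {1..}" "j \<in> {1..}" "kvec c i = kvec c j"
  then have "kvec c i i = kvec c j i" by simp
  then show "i = j" using sig_pos[of i c] ij by (auto simp: kvec_def unit_vec_def split: if_splits)
qed

lemma entropy_lower:
  assumes c: "c > 0"
  shows "2 powr (-c) * 2 powr (- c * real n) \<le> inner_entropy n (Kset (sig c))"
  unfolding inner_entropy_def
proof (rule cInf_greatest)
  show "{\<epsilon>. \<epsilon> > 0 \<and> (\<exists>C. C \<subseteq> Kset (sig c) \<and> finite C \<and> card C \<le> 2 ^ n \<and>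
        (\<forall>f\<in>Kset (sig c). \<exists>z\<in>C. c0_dist f z \<le> \<epsilon>))} \<noteq> {}"
    using entropy_mem[OF c] by (rule ex_in_conv[THEN iffD1, OF exI])
next
  fix \<epsilon> assume "\<epsilon> \<in> {\<epsilon>. \<epsilon> > 0 \<and> (\<exists>C. C \<subseteq> Kset (sig c) \<and> finite C \<and> card C \<le> 2 ^ n \<and>
        (\<forall>f\<in>Kset (sig c). \<exists>z\<in>C. c0_dist f z \<le> \<epsilon>))}"
  then obtain C where C: "C \<subseteq> Kset (sig c)" "finite C" "card C \<le> 2 ^ n"
     "\<forall>f\<in>Kset (sig c). \<exists>z\<in>C. c0_dist f z \<le> \<epsilon>" by auto
  let ?P = "kvec c ` {1..2^n+1}"
  have "card ?P = 2^n + 1"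
  proof -
    have "inj_on (kvec c) {1..2^n+1}" by (rule inj_on_subset[OF kvec_inj]) auto
    then have "card ?P = card {1..2^n+1::nat}" by (rule card_image)
    then show ?thesis by simp
  qed
  have "\<not> ?P \<subseteq> C"
  proof
    assume "?P \<subseteq> C"
    then have "card ?P \<le> card C" by (rule card_mono[OF C(2)])
    then show False using C(3) \<open>card ?P = 2^n + 1\<close> by linarith
  qed
  then obtain j where j: "j \<in> {1..2^n+1}" "kvec c j \<notin> C" by blast
  have "kvec c j \<in> Kset (sig c)" using j unfolding Kset_eq by auto
  then obtain z where z: "z \<in> C" "c0_dist (kvec c j) z \<le> \<epsilon>" using C(4) by blast
  have "sig c j \<le> c0_dist (kvec c j) z"
    using z j C(1) by (intro dist_vec_ge[OF c]) auto
  moreover have "sig c (2^(n+1)) \<le> sig c j"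
  proof -
    have a: "j \<le> 2^n + 1" using j by simp
    have b: "(1::nat) \<le> 2^n" by simp
    have d: "(2::nat)^(n+1) = 2 * 2^n" by simp
    from a b d have "j \<le> 2^(n+1)" by linarith
    then show ?thesis using j c by (intro sig_anti) auto
  qed
  moreover have "sig c (2^(n+1)) = 2 powr (-c) * 2 powr (- c * real n)"
    unfolding sig_def
  proof -
    have e: "real (n+1) * (-c) = -c + - c * real n" by (simp add: algebra_simps)
    have "real (2^(n+1)) = 2 powr real (n+1)" by (subst powr_realpow) auto
    then have "real (2^(n+1)) powr (-c) = (2 powr real (n+1)) powr (-c)" by simp
    also have "\<dots> = 2 powr (real (n+1) * (-c))" by (rule powr_powr)
    also have "\<dots> = 2 powr (-c + - c * real n)" by (simp only: e)
    also have "\<dots> = 2 powr (-c) * 2 powr (- c * real n)" by (rule powr_add)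
    finally show "real (2^(n+1)) powr (-c) = 2 powr (-c) * 2 powr (- c * real n)" .
  qed
  ultimately show "2 powr (-c) * 2 powr (- c * real n) \<le> \<epsilon>" using z by linarith
qed




definition mnorm :: "nat \<Rightarrow> (nat \<Rightarrow> real) \<Rightarrow> real" where
  "mnorm k y = Max ((\<lambda>i. \<bar>y i\<bar>) ` {..<k})"

lemma mnorm_ge: "i < k \<Longrightarrow> \<bar>y i\<bar> \<le> mnorm k y"
  unfolding mnorm_def by (rule Max_ge) auto

lemma mnorm_le: "1 \<le> k \<Longrightarrow> (\<And>i. i < k \<Longrightarrow> \<bar>y i\<bar> \<le> B) \<Longrightarrow> mnorm k y \<le> B"
  unfolding mnorm_def by (subst Max_le_iff) (auto simp: lessThan_empty_iff)

lemma mnorm_attain: "1 \<le> k \<Longrightarrow> \<exists>i<k. mnorm k y = \<bar>y i\<bar>"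
proof -
  assume k: "1 \<le> k"
  have "mnorm k y \<in> (\<lambda>i. \<bar>y i\<bar>) ` {..<k}" unfolding mnorm_def
    using k by (intro Max_in) (auto simp: lessThan_empty_iff)
  then show ?thesis by auto
qed

lemma mnorm_nonneg: "1 \<le> k \<Longrightarrow> 0 \<le> mnorm k y"
  using mnorm_ge[of 0 k y] by simp

lemma mnorm_tri: "1 \<le> k \<Longrightarrow> mnorm k (\<lambda>i. x i + y i) \<le> mnorm k x + mnorm k y"
proof (rule mnorm_le)
  fix i assume "i < k"
  have "\<bar>x i + y i\<bar> \<le> \<bar>x i\<bar> + \<bar>y i\<bar>" by (rule abs_triangle_ineq)
  also have "\<dots> \<le> mnorm k x + mnorm k y" using \<open>i < k\<close> by (intro add_mono mnorm_ge)
  finally show "\<bar>x i + y i\<bar> \<le> mnorm k x + mnorm k y" .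
qed

lemma mnorm_lip: "1 \<le> k \<Longrightarrow> \<bar>mnorm k u - mnorm k v\<bar> \<le> mnorm k (\<lambda>i. u i - v i)"
proof -
  assume k: "1 \<le> k"
  have a: "mnorm k u \<le> mnorm k (\<lambda>i. u i - v i) + mnorm k v"
    using mnorm_tri[OF k, of "\<lambda>i. u i - v i" v] by simp
  have b: "mnorm k v \<le> mnorm k (\<lambda>i. v i - u i) + mnorm k u"
    using mnorm_tri[OF k, of "\<lambda>i. v i - u i" u] by simp
  have "mnorm k (\<lambda>i. v i - u i) = mnorm k (\<lambda>i. u i - v i)"
    unfolding mnorm_def by (simp add: abs_minus_commute)
  then show ?thesis using a b by linarith
qed

lemma mnorm_scale: "1 \<le> k \<Longrightarrow> mnorm k (\<lambda>i. a * x i) = \<bar>a\<bar> * mnorm k x"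
proof (rule antisym)
  assume k: "1 \<le> k"
  show "mnorm k (\<lambda>i. a * x i) \<le> \<bar>a\<bar> * mnorm k x"
  proof (rule mnorm_le[OF k])
    fix i assume "i < k"
    then have "\<bar>x i\<bar> \<le> mnorm k x" by (rule mnorm_ge)
    then show "\<bar>a * x i\<bar> \<le> \<bar>a\<bar> * mnorm k x" by (simp add: abs_mult mult_left_mono)
  qed
  obtain i where "i < k" "mnorm k x = \<bar>x i\<bar>" using mnorm_attain[OF k] by blast
  then show "\<bar>a\<bar> * mnorm k x \<le> mnorm k (\<lambda>i. a * x i)"
    using mnorm_ge[of i k "\<lambda>i. a * x i"] by (simp add: abs_mult)
qed

lemma mnorm_is_norm: "1 \<le> k \<Longrightarrow> is_norm_on_Rk k (mnorm k)"
  unfolding is_norm_on_Rk_def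
proof (intro conjI ballI allI)
  assume k: "1 \<le> k"
  fix x assume x: "x \<in> Rk k"
  show "0 \<le> mnorm k x" using mnorm_nonneg[OF k] .
  show "(mnorm k x = 0) = (x = (\<lambda>i. 0))"
  proof
    assume "mnorm k x = 0"
    then have "\<And>i. i < k \<Longrightarrow> x i = 0"
    proof -
      fix i assume "mnorm k x = 0" "i < k"
      then show "x i = 0" using mnorm_ge[of i k x] by simp
    qed
    note xi = this
    show "x = (\<lambda>i. 0)"
    proof (rule ext)
      fix i
      show "x i = 0"
      proof (cases "i < k")
        case True then show ?thesis by (rule xi)
      next
        case False then show ?thesis using x unfolding Rk_def by simp
      qed
    qed
  next
    assume "x = (\<lambda>i. 0)"
    then show "mnorm k x = 0" using mnorm_attain[OF k, of x] by auto
  qed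
  fix a :: real show "mnorm k (\<lambda>i. a * x i) = \<bar>a\<bar> * mnorm k x" by (rule mnorm_scale[OF k])
  fix y show "mnorm k (\<lambda>i. x i + y i) \<le> mnorm k x + mnorm k y" by (rule mnorm_tri[OF k])
qed




definition lev :: "nat \<Rightarrow> nat \<Rightarrow> nat" where
  "lev q j = (LEAST L. j < 2^(q * Suc L))"

definition levset :: "nat \<Rightarrow> nat \<Rightarrow> nat set" where
  "levset q L = {j. 1 \<le> j \<and> 2^(q*L) \<le> j \<and> j < 2^(q * Suc L)}"

definition grid :: "nat \<Rightarrow> nat \<Rightarrow> (nat \<Rightarrow> nat) set" where
  "grid d L = PiE {1..d} (\<lambda>_. {0..(2::nat)^L})"

definition gmap :: "nat \<Rightarrow> nat \<Rightarrow> nat \<Rightarrow> nat \<Rightarrow> nat \<Rightarrow> nat" where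
  "gmap q d L = (SOME g. g ` levset q L \<subseteq> grid d L \<and> inj_on g (levset q L))"

definition Ypt :: "nat \<Rightarrow> nat \<Rightarrow> nat \<Rightarrow> nat \<Rightarrow> real" where
  "Ypt q d j = (\<lambda>i. if i = 0 then (1/2)^(lev q j)
      else if i \<le> d then real (gmap q d (lev q j) j i) / 2^(lev q j) else 0)"

lemma lev_props:
  assumes q: "1 \<le> q" and j: "1 \<le> j"
  shows "j \<in> levset q (lev q j)"
proof -
  have ex: "\<exists>L. j < 2^(q * Suc L)"
  proof
    have "j < 2^j" by (rule less_exp)
    also have "(2::nat)^j \<le> 2^(q * Suc j)"
    proof (rule power_increasing)
      have "j \<le> q * j" using q by simp
      also have "\<dots> \<le> q * Suc j" by simp
      finally show "j \<le> q * Suc j" .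
    qed simp
    finally show "j < 2^(q * Suc j)" .
  qed
  have up: "j < 2^(q * Suc (lev q j))" unfolding lev_def by (rule LeastI_ex[OF ex])
  have low: "2^(q * lev q j) \<le> j"
  proof (cases "lev q j")
    case 0 then show ?thesis using j by simp
  next
    case (Suc m)
    have "\<not> j < 2^(q * Suc m)"
    proof
      assume "j < 2^(q * Suc m)"
      then have "lev q j \<le> m" unfolding lev_def by (rule Least_le)
      then show False using Suc by simp
    qed
    then show ?thesis using Suc by simp
  qed
  show ?thesis using up low j unfolding levset_def by auto
qed

lemma levset_finite: "finite (levset q L)"
  unfolding levset_def by (rule finite_subset[of _ "{..<2^(q * Suc L)}"]) auto

lemma levset_card: "card (levset q L) \<le> 2^(q * Suc L)"
proof -
  have "card (levset q L) \<le> card {..<(2::nat)^(q * Suc L)}"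
    unfolding levset_def by (rule card_mono) auto
  then show ?thesis by simp
qed

lemma grid_card: "card (grid d L) = (2^L + 1)^d"
  unfolding grid_def by (simp add: card_PiE)

lemma grid_finite: "finite (grid d L)"
  unfolding grid_def by (simp add: finite_PiE)

lemma card_ineq: "(2::nat)^(q * Suc L) \<le> (2^L + 1)^(2*q)"
proof -
  have "(2::nat)^(q * Suc L) = (2^(Suc L))^q" by (simp only: mult.commute[of q] power_mult)
  also have "\<dots> \<le> ((2^L + 1)^2)^q"
  proof (rule power_mono)
    have "(2::nat)^Suc L = 2 * 2^L" by simp
    also have "\<dots> \<le> (2^L + 1)^2" by (simp add: power2_eq_square algebra_simps)
    finally show "(2::nat)^Suc L \<le> (2^L + 1)^2" .
  qed simp
  also have "\<dots> = (2^L + 1)^(2*q)" by (simp add: power_mult)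
  finally show ?thesis .
qed

lemma gmap_props:
  shows "gmap q (2*q) L ` levset q L \<subseteq> grid (2*q) L \<and> inj_on (gmap q (2*q) L) (levset q L)"
proof -
  have "\<exists>g. g ` levset q L \<subseteq> grid (2*q) L \<and> inj_on g (levset q L)"
    by (rule card_le_inj[OF levset_finite grid_finite])
       (metis grid_card levset_card card_ineq order_trans)
  then show ?thesis unfolding gmap_def by (rule someI_ex)
qed




lemma sig_lev:
  assumes c: "c > 0" and q: "1 \<le> q" and cq: "1 \<le> c * q" and i: "1 \<le> i"
  shows "sig c i \<le> (1/2)^(lev q i)"
proof -
  let ?L = "lev q i"
  have "2^(q * ?L) \<le> i" using lev_props[OF q i] unfolding levset_def by auto
  then have "sig c i \<le> sig c (2^(q * ?L))" using c by (intro sig_anti) auto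
  also have "sig c (2^(q * ?L)) = 2 powr (- (c * q * ?L))"
  proof -
    have h: "real (2^(q * ?L)) = 2 powr real (q * ?L)" by (subst powr_realpow) auto
    have e: "real (q * ?L) * (-c) = - (c * q * ?L)" by (simp add: algebra_simps)
    show ?thesis unfolding sig_def by (simp only: h powr_powr e)
  qed
  also have "\<dots> \<le> 2 powr (- real ?L)"
  proof (rule powr_mono)
    have "real ?L \<le> c * q * real ?L" using cq by (simp add: mult_le_cancel_right1)
    then show "- (c * real q * real ?L) \<le> - real ?L" by simp
  qed simp
  also have "\<dots> = (1/2)^?L" by (simp add: powr_minus powr_realpow power_one_over inverse_eq_divide)
  finally show ?thesis .
qed

lemma aux1: "0 < (x::real) \<Longrightarrow> x*2 \<le> y \<Longrightarrow> y \<le> 2 * \<bar>x - y\<bar>" by (simp add: abs_if)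
lemma aux2: "0 < (x::real) \<Longrightarrow> x*2 \<le> y \<Longrightarrow> x \<le> 2 * \<bar>y - x\<bar>" by (simp add: abs_if)

lemma aux3: "(a::real) \<le> 2*x \<Longrightarrow> x \<le> N \<Longrightarrow> a \<le> 2*N" by linarith

lemma sep:
  assumes c: "c > 0" and q: "1 \<le> q" and cq: "1 \<le> c * q" and g: "2 \<le> \<gamma>"
    and i: "1 \<le> i" and j: "1 \<le> j" and ij: "i \<noteq> j"
  shows "sig c i \<le> \<gamma> * mnorm (2*q+1) (\<lambda>t. Ypt q (2*q) j t - Ypt q (2*q) i t)"
proof -
  let ?N = "mnorm (2*q+1) (\<lambda>t. Ypt q (2*q) j t - Ypt q (2*q) i t)"
  let ?a = "lev q i" and ?b = "lev q j"
  have si: "sig c i \<le> (1/2)^?a" by (rule sig_lev[OF c q cq i])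
  show ?thesis
  proof (cases "?a = ?b")
    case False
    have "\<bar>(1/2::real)^?b - (1/2)^?a\<bar> \<le> ?N"
      using mnorm_ge[of 0 "2*q+1" "\<lambda>t. Ypt q (2*q) j t - Ypt q (2*q) i t"] by (simp add: Ypt_def)
    moreover have "(1/2::real)^?a \<le> 2 * \<bar>(1/2::real)^?b - (1/2)^?a\<bar>"
    proof (cases "?a < ?b")
      case True
      then have "(1/2::real)^?b \<le> (1/2)^(Suc ?a)" by (intro power_decreasing) auto
      then have *: "(1/2::real)^?b * 2 \<le> (1/2)^?a" by simp
      show ?thesis by (rule aux1[OF _ *]) simp
    next
      case f: False
      then have "?b < ?a" using False by simp
      then have "(1/2::real)^?a \<le> (1/2)^(Suc ?b)" by (intro power_decreasing) auto
      then have *: "(1/2::real)^?a * 2 \<le> (1/2)^?b" by simp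
      show ?thesis by (rule aux2[OF _ *]) simp
    qed
    ultimately have "(1/2::real)^?a \<le> 2 * ?N" by (rule aux3[rotated])
    also have "\<dots> \<le> \<gamma> * ?N" using g mnorm_nonneg[of "2*q+1"] by (intro mult_right_mono) auto
    finally show ?thesis using si by linarith
  next
    case True
    have li: "i \<in> levset q ?a" and lj: "j \<in> levset q ?a" using lev_props[OF q i] lev_props[OF q j] True by auto
    let ?g = "gmap q (2*q) ?a"
    have gi: "?g i \<in> grid (2*q) ?a" by (rule subsetD[OF conjunct1[OF gmap_props[of q ?a]] imageI[OF li]])
    have gj: "?g j \<in> grid (2*q) ?a" by (rule subsetD[OF conjunct1[OF gmap_props[of q ?a]] imageI[OF lj]])
    have ne: "?g i \<noteq> ?g j"
    proof
      assume "?g i = ?g j"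
      from inj_onD[OF conjunct2[OF gmap_props[of q ?a]] this li lj] ij show False by simp
    qed
    have "\<exists>t\<in>{1..2*q}. ?g i t \<noteq> ?g j t"
    proof (rule ccontr)
      assume "\<not> ?thesis"
      then have "?g i = ?g j" using gi gj unfolding grid_def by (intro PiE_ext) auto
      with ne show False by contradiction
    qed
    then obtain t where t: "t \<in> {1..2*q}" "?g i t \<noteq> ?g j t" by blast
    have "1 \<le> \<bar>real (?g j t) - real (?g i t)\<bar>" using t(2) by linarith
    then have "(1/2::real)^?a \<le> \<bar>real (?g j t) - real (?g i t)\<bar> / 2^?a"
      by (simp add: power_divide divide_right_mono)
    also have "\<dots> = \<bar>Ypt q (2*q) j t - Ypt q (2*q) i t\<bar>"
      using t(1) True by (simp add: Ypt_def diff_divide_distrib[symmetric] abs_divide)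
    also have "\<dots> \<le> ?N" using t(1) by (intro mnorm_ge) auto
    also have "\<dots> \<le> \<gamma> * ?N"
    proof -
      have "0 \<le> ?N" by (rule mnorm_nonneg) simp
      then show ?thesis using g mult_right_mono[of 1 \<gamma> ?N] by simp
    qed
    finally show ?thesis using si by linarith
  qed
qed




lemma c0_bounded: "x \<in> c0 \<Longrightarrow> \<exists>M. \<forall>i. \<bar>x i\<bar> \<le> M"
proof -
  assume "x \<in> c0"
  then have "x \<longlonglongrightarrow> 0" unfolding c0_def by simp
  then have "Bseq x" by (intro convergent_imp_Bseq convergentI)
  then obtain K where "\<forall>n. norm (x n) \<le> K" by (auto elim: BseqE)
  then show ?thesis by auto
qed

lemma elem_nonneg:
  assumes c: "c > 0" and N: "is_norm_on_Rk k N" and Phi: "\<forall>y\<in>unit_ball_Rk k N. \<Phi> y \<in> c0"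
  shows "0 \<le> (SUP f\<in>Kset (sig c). INF y\<in>unit_ball_Rk k N. c0_dist f (\<Phi> y))"
proof -
  let ?B = "unit_ball_Rk k N"
  have z: "(\<lambda>i. 0) \<in> ?B" using N unfolding unit_ball_Rk_def is_norm_on_Rk_def Rk_def by auto
  have nn: "0 \<le> c0_dist f (\<Phi> y)" if fK: "f \<in> Kset (sig c)" and yB: "y \<in> ?B" for f y
  proof -
    have "\<Phi> y \<in> c0" using Phi yB by blast
    then obtain M where M: "\<forall>i. \<bar>\<Phi> y i\<bar> \<le> M" using c0_bounded by blast
    show ?thesis by (rule c0_dist_nonneg[of f 1 "\<Phi> y" M]) (use M K_bound[OF c fK] in auto)
  qed
  obtain M where M: "\<forall>i. \<bar>\<Phi> (\<lambda>i. 0) i\<bar> \<le> M" using c0_bounded Phi z by blast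
  have h0: "0 \<le> (INF y\<in>?B. c0_dist f (\<Phi> y))" if "f \<in> Kset (sig c)" for f
    using z nn that by (intro cINF_greatest) auto
  have h1: "(INF y\<in>?B. c0_dist f (\<Phi> y)) \<le> 1 + M" if "f \<in> Kset (sig c)" for f
  proof -
    have "(INF y\<in>?B. c0_dist f (\<Phi> y)) \<le> c0_dist f (\<Phi> (\<lambda>i. 0))"
      using z nn that by (intro cINF_lower bdd_belowI2[where m=0]) auto
    also have "\<dots> \<le> 1 + M"
      by (rule c0_dist_le) (metis abs_triangle_ineq4 add_mono K_bound[OF c that] M order_trans)
    finally show ?thesis .
  qed
  have "(\<lambda>i. 0) \<in> Kset (sig c)" unfolding Kset_def by auto
  then show ?thesis using h0 h1 by (intro cSUP_upper2[where x="\<lambda>i. 0"]) (auto intro: bdd_aboveI2[where M="1+M"])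
qed

lemma zero_c0: "(\<lambda>i. 0::real) \<in> c0" unfolding c0_def by simp

lemma lwk_nonneg:
  assumes c: "c > 0" and g: "\<gamma> \<ge> 0" and N: "is_norm_on_Rk k N"
  shows "0 \<le> lip_width_k \<gamma> (Kset (sig c)) k N"
  unfolding lip_width_k_def
proof (rule cInf_greatest)
  have B: "\<forall>y\<in>unit_ball_Rk k N. \<forall>y'\<in>unit_ball_Rk k N.
          c0_dist ((\<lambda>y i. 0::real) y) ((\<lambda>y i. 0) y') \<le> \<gamma> * N (\<lambda>i. y i - y' i)"
  proof (intro ballI)
    fix y y' assume "y \<in> unit_ball_Rk k N" "y' \<in> unit_ball_Rk k N"
    then have "(\<lambda>i. y i - y' i) \<in> Rk k" unfolding unit_ball_Rk_def Rk_def by auto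
    then have "0 \<le> N (\<lambda>i. y i - y' i)" using N unfolding is_norm_on_Rk_def by blast
    then show "c0_dist ((\<lambda>y i. 0::real) y) ((\<lambda>y i. 0) y') \<le> \<gamma> * N (\<lambda>i. y i - y' i)"
      using g by (simp add: c0_dist_self)
  qed
  show "{(SUP f\<in>Kset (sig c). INF y\<in>unit_ball_Rk k N. c0_dist f (\<Phi> y)) | \<Phi>.
      (\<forall>y\<in>unit_ball_Rk k N. \<Phi> y \<in> c0) \<and>
      (\<forall>y\<in>unit_ball_Rk k N. \<forall>y'\<in>unit_ball_Rk k N.
          c0_dist (\<Phi> y) (\<Phi> y') \<le> \<gamma> * N (\<lambda>i. y i - y' i))} \<noteq> {}"
    using B zero_c0 by (intro ex_in_conv[THEN iffD1] exI CollectI exI[of _ "\<lambda>y i. 0"] conjI refl) auto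
next
  fix x assume "x \<in> {(SUP f\<in>Kset (sig c). INF y\<in>unit_ball_Rk k N. c0_dist f (\<Phi> y)) | \<Phi>.
      (\<forall>y\<in>unit_ball_Rk k N. \<Phi> y \<in> c0) \<and>
      (\<forall>y\<in>unit_ball_Rk k N. \<forall>y'\<in>unit_ball_Rk k N.
          c0_dist (\<Phi> y) (\<Phi> y') \<le> \<gamma> * N (\<lambda>i. y i - y' i))}"
  then show "0 \<le> x" using elem_nonneg[OF c N] by auto
qed




definition Phi :: "real \<Rightarrow> real \<Rightarrow> nat \<Rightarrow> (nat \<Rightarrow> nat \<Rightarrow> real) \<Rightarrow> (nat \<Rightarrow> real) \<Rightarrow> nat \<Rightarrow> real" where
  "Phi c \<gamma> k Y y = (\<lambda>i. if i = 0 then 0 else max 0 (sig c i - \<gamma> * mnorm k (\<lambda>t. y t - Y i t)))"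

lemma sig_tends: "c > 0 \<Longrightarrow> sig c \<longlonglongrightarrow> 0"
  unfolding sig_def by (rule tendsto_neg_powr) (auto intro: filterlim_real_sequentially)

lemma sig0: "c > 0 \<Longrightarrow> sig c 0 = 0" unfolding sig_def by simp

lemma Phi_bounds:
  assumes c: "c > 0" and g: "\<gamma> \<ge> 0" and k: "1 \<le> k"
  shows "0 \<le> Phi c \<gamma> k Y y i \<and> Phi c \<gamma> k Y y i \<le> sig c i"
proof -
  have "0 \<le> \<gamma> * mnorm k (\<lambda>t. y t - Y i t)" using g mnorm_nonneg[OF k] by simp
  moreover have "i \<noteq> 0 \<Longrightarrow> 0 \<le> sig c i" using sig_pos[of i c] by simp
  ultimately show ?thesis unfolding Phi_def using sig0[OF c] by auto
qed

lemma Phi_c0: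
  assumes c: "c > 0" and g: "\<gamma> \<ge> 0" and k: "1 \<le> k"
  shows "Phi c \<gamma> k Y y \<in> c0"
  unfolding c0_def
proof (intro CollectI conjI)
  show "Phi c \<gamma> k Y y 0 = 0" unfolding Phi_def by simp
  show "Phi c \<gamma> k Y y \<longlonglongrightarrow> 0"
    by (rule tendsto_sandwich[of "\<lambda>_. 0" _ _ "sig c"])
       (use Phi_bounds[OF c g k] sig_tends[OF c] in auto)
qed

lemma max0_lip: "\<bar>max 0 (u::real) - max 0 v\<bar> \<le> \<bar>u - v\<bar>"
  by (simp add: max_def abs_if)

lemma Phi_lip:
  assumes c: "c > 0" and g: "\<gamma> \<ge> 0" and k: "1 \<le> k"
  shows "c0_dist (Phi c \<gamma> k Y y) (Phi c \<gamma> k Y y') \<le> \<gamma> * mnorm k (\<lambda>i. y i - y' i)"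
proof (rule c0_dist_le)
  fix i
  let ?A = "mnorm k (\<lambda>t. y t - Y i t)" and ?B = "mnorm k (\<lambda>t. y' t - Y i t)"
  have "\<bar>?A - ?B\<bar> \<le> mnorm k (\<lambda>t. (y t - Y i t) - (y' t - Y i t))" by (rule mnorm_lip[OF k])
  also have "(\<lambda>t. (y t - Y i t) - (y' t - Y i t)) = (\<lambda>t. y t - y' t)" by auto
  finally have AB: "\<bar>?A - ?B\<bar> \<le> mnorm k (\<lambda>i. y i - y' i)" .
  have "\<bar>max 0 (sig c i - \<gamma> * ?A) - max 0 (sig c i - \<gamma> * ?B)\<bar> \<le> \<gamma> * \<bar>?A - ?B\<bar>"
  proof -
    have "\<bar>max 0 (sig c i - \<gamma> * ?A) - max 0 (sig c i - \<gamma> * ?B)\<bar> \<le> \<bar>(sig c i - \<gamma> * ?A) - (sig c i - \<gamma> * ?B)\<bar>"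
      by (rule max0_lip)
    also have "\<bar>(sig c i - \<gamma> * ?A) - (sig c i - \<gamma> * ?B)\<bar> = \<gamma> * \<bar>?A - ?B\<bar>"
      using g by (simp add: abs_mult right_diff_distrib[symmetric] abs_minus_commute)
    finally show ?thesis .
  qed
  also have "\<dots> \<le> \<gamma> * mnorm k (\<lambda>i. y i - y' i)" by (rule mult_left_mono[OF AB g])
  finally show "\<bar>Phi c \<gamma> k Y y i - Phi c \<gamma> k Y y' i\<bar> \<le> \<gamma> * mnorm k (\<lambda>i. y i - y' i)"
    unfolding Phi_def using g mnorm_nonneg[OF k] by auto
qed




lemma mnorm_zero: "1 \<le> k \<Longrightarrow> mnorm k (\<lambda>t. 0) = 0"
  using mnorm_attain[of k "\<lambda>t. 0"] by auto

lemma Ypt_ball: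
  assumes q: "1 \<le> q" and j: "1 \<le> j"
  shows "Ypt q (2*q) j \<in> unit_ball_Rk (2*q+1) (mnorm (2*q+1))"
  unfolding unit_ball_Rk_def
proof (intro CollectI conjI)
  show "Ypt q (2*q) j \<in> Rk (2*q+1)" unfolding Rk_def Ypt_def by auto
  let ?L = "lev q j"
  have "gmap q (2*q) ?L j \<in> grid (2*q) ?L" using gmap_props lev_props[OF q j] by blast
  then have gb: "\<And>i. i \<in> {1..2*q} \<Longrightarrow> gmap q (2*q) ?L j i \<le> 2^?L" unfolding grid_def by auto
  show "mnorm (2*q+1) (Ypt q (2*q) j) \<le> 1"
  proof (rule mnorm_le)
    fix i assume "i < 2*q+1"
    show "\<bar>Ypt q (2*q) j i\<bar> \<le> 1"
    proof (cases "i = 0")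
      case True then show ?thesis by (simp add: Ypt_def power_le_one)
    next
      case False
      then have "i \<in> {1..2*q}" using \<open>i < 2*q+1\<close> by auto
      then have "real (gmap q (2*q) ?L j i) \<le> 2^?L" using gb
        by (metis numeral_power_eq_of_nat_cancel_iff of_nat_le_iff)
      then show ?thesis using False \<open>i < 2*q+1\<close> by (simp add: Ypt_def)
    qed
  qed simp
qed

lemma Phi_Y:
  assumes c: "c > 0" and q: "1 \<le> q" and cq: "1 \<le> c * q" and g: "2 \<le> \<gamma>" and j: "1 \<le> j"
  shows "Phi c \<gamma> (2*q+1) (Ypt q (2*q)) (Ypt q (2*q) j) = kvec c j"
proof
  fix i
  show "Phi c \<gamma> (2*q+1) (Ypt q (2*q)) (Ypt q (2*q) j) i = kvec c j i"
  proof (cases "i = 0")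
    case True then show ?thesis using j by (simp add: Phi_def kvec_def unit_vec_def)
  next
    case False
    show ?thesis
    proof (cases "i = j")
      case True
      then show ?thesis using False sig_pos[OF j, of c]
        by (simp add: Phi_def kvec_def unit_vec_def mnorm_zero)
    next
      case ne: False
      have "sig c i \<le> \<gamma> * mnorm (2*q+1) (\<lambda>t. Ypt q (2*q) j t - Ypt q (2*q) i t)"
        using False ne j by (intro sep[OF c q cq g]) auto
      then show ?thesis using False ne by (simp add: Phi_def kvec_def unit_vec_def)
    qed
  qed
qed

lemma lwk_zero:
  assumes c: "c > 0" and q: "1 \<le> q" and cq: "1 \<le> c * q" and g: "2 \<le> \<gamma>"
  shows "lip_width_k \<gamma> (Kset (sig c)) (2*q+1) (mnorm (2*q+1)) = 0"
  unfolding lip_width_k_def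
proof (rule cInf_eq_minimum)
  let ?k = "2*q+1"
  let ?B = "unit_ball_Rk ?k (mnorm ?k)"
  let ?P = "Phi c \<gamma> ?k (Ypt q (2*q))"
  have k: "1 \<le> ?k" by simp
  have g0: "0 \<le> \<gamma>" using g by simp
  have Pb: "\<bar>?P y i\<bar> \<le> 1" for y i
  proof -
    have "0 \<le> ?P y i" "?P y i \<le> sig c i" using Phi_bounds[OF c g0 k] by auto
    moreover have "sig c i \<le> 1" using sig_le1[OF c, of i] sig0[OF c] by (cases "i = 0") auto
    ultimately show ?thesis by simp
  qed
  have nn: "0 \<le> c0_dist f (?P y)" if "f \<in> Kset (sig c)" for f y
    using c0_dist_nonneg[of f 1 "?P y" 1] K_bound[OF c that] Pb by blast
  have Bne: "Ypt q (2*q) 1 \<in> ?B" by (rule Ypt_ball[OF q]) simp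
  have h: "(INF y\<in>?B. c0_dist f (?P y)) = 0" if f: "f \<in> Kset (sig c)" for f
  proof (rule antisym)
    show "0 \<le> (INF y\<in>?B. c0_dist f (?P y))" using Bne nn f by (intro cINF_greatest) auto
    have bb: "bdd_below ((\<lambda>y. c0_dist f (?P y)) ` ?B)" using nn f by (intro bdd_belowI2[where m=0]) auto
    from f consider "f = (\<lambda>i. 0)" | j where "j \<ge> 1" "f = kvec c j" unfolding Kset_eq by auto
    then show "(INF y\<in>?B. c0_dist f (?P y)) \<le> 0"
    proof cases
      case (2 j)
      have "(INF y\<in>?B. c0_dist f (?P y)) \<le> c0_dist f (?P (Ypt q (2*q) j))"
        by (rule cINF_lower[OF bb Ypt_ball[OF q 2(1)]])
      also have "\<dots> = 0" using Phi_Y[OF c q cq g 2(1)] 2 by (simp add: c0_dist_self)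
      finally show ?thesis .
    next
      case 1
      have le: "(INF y\<in>?B. c0_dist f (?P y)) \<le> sig c j" if j: "1 \<le> j" for j
      proof -
        have "(INF y\<in>?B. c0_dist f (?P y)) \<le> c0_dist f (?P (Ypt q (2*q) j))"
          by (rule cINF_lower[OF bb Ypt_ball[OF q j]])
        also have "\<dots> \<le> sig c j" using Phi_Y[OF c q cq g j] 1
          by (intro c0_dist_le) (auto simp: kvec_def unit_vec_def abs_mult sig_pos[OF j] less_imp_le)
        finally show ?thesis .
      qed
      show ?thesis
      proof (rule ccontr)
        assume "\<not> ?thesis"
        then have "0 < (INF y\<in>?B. c0_dist f (?P y))" by simp
        from order_tendstoD(2)[OF sig_tends[OF c] this]
        obtain M where "\<forall>n\<ge>M. sig c n < (INF y\<in>?B. c0_dist f (?P y))"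
          unfolding eventually_sequentially by blast
        then have "sig c (max M 1) < (INF y\<in>?B. c0_dist f (?P y))" by simp
        with le[of "max M 1"] show False by simp
      qed
    qed
  qed
  have val: "(SUP f\<in>Kset (sig c). INF y\<in>?B. c0_dist f (?P y)) = 0"
  proof -
    have "(SUP f\<in>Kset (sig c). INF y\<in>?B. c0_dist f (?P y)) = (SUP f\<in>Kset (sig c). (0::real))"
      by (rule SUP_cong) (rule refl, rule h)
    also have "\<dots> = 0" by (rule cSUP_const) (auto simp: Kset_def)
    finally show ?thesis .
  qed
  have adm1: "\<forall>y\<in>?B. ?P y \<in> c0" using Phi_c0[OF c g0 k] by blast
  have adm2: "\<forall>y\<in>?B. \<forall>y'\<in>?B. c0_dist (?P y) (?P y') \<le> \<gamma> * mnorm ?k (\<lambda>i. y i - y' i)"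
    using Phi_lip[OF c g0 k] by blast
  show "0 \<in> {(SUP f\<in>Kset (sig c). INF y\<in>?B. c0_dist f (\<Phi> y)) | \<Phi>.
      (\<forall>y\<in>?B. \<Phi> y \<in> c0) \<and>
      (\<forall>y\<in>?B. \<forall>y'\<in>?B. c0_dist (\<Phi> y) (\<Phi> y') \<le> \<gamma> * mnorm ?k (\<lambda>i. y i - y' i))}"
    using val adm1 adm2 by (intro CollectI exI[of _ ?P] conjI) auto
  fix x assume "x \<in> {(SUP f\<in>Kset (sig c). INF y\<in>?B. c0_dist f (\<Phi> y)) | \<Phi>.
      (\<forall>y\<in>?B. \<Phi> y \<in> c0) \<and>
      (\<forall>y\<in>?B. \<forall>y'\<in>?B. c0_dist (\<Phi> y) (\<Phi> y') \<le> \<gamma> * mnorm ?k (\<lambda>i. y i - y' i))}"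
  then show "0 \<le> x" using elem_nonneg[OF c mnorm_is_norm[OF k]] by auto
qed

theorem theorem4p11:
  fixes c :: real
  assumes "c > 0"
  defines "\<sigma> \<equiv> (\<lambda>j::nat. (real j) powr (- c))"
  shows "(\<exists>c1 C1. 0 < c1 \<and> c1 \<le> C1 \<and>
            (\<forall>n::nat. c1 * 2 powr (- c * real n) \<le> inner_entropy n (Kset \<sigma>) \<and>
                      inner_entropy n (Kset \<sigma>) \<le> C1 * 2 powr (- c * real n)))
       \<and> (\<forall>\<gamma>::real. \<gamma> > 2 \<longrightarrow> (\<exists>n1::nat. \<forall>n\<ge>n1. lip_width \<gamma> n (Kset \<sigma>) = 0))"
proof -
  have c: "c > 0" by (rule assms)
  have sg: "\<sigma> = sig c" unfolding \<sigma>_def sig_def by simp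
  have p1: "\<exists>c1 C1. 0 < c1 \<and> c1 \<le> C1 \<and>
            (\<forall>n::nat. c1 * 2 powr (- c * real n) \<le> inner_entropy n (Kset (sig c)) \<and>
                      inner_entropy n (Kset (sig c)) \<le> C1 * 2 powr (- c * real n))"
  proof (intro exI conjI allI)
    show "0 < 2 powr (-c)" by simp
    have "2 powr (-c) \<le> 2 powr 0" using c by (intro powr_mono) auto
    then show "2 powr (-c) \<le> (1::real)" by simp
    fix n
    show "2 powr (-c) * 2 powr (- c * real n) \<le> inner_entropy n (Kset (sig c))"
      by (rule entropy_lower[OF c])
    show "inner_entropy n (Kset (sig c)) \<le> 1 * 2 powr (- c * real n)"
      using entropy_upper[OF c] by simp
  qed
  have p2: "\<exists>n1::nat. \<forall>n\<ge>n1. lip_width \<gamma> n (Kset (sig c)) = 0" if g: "\<gamma> > 2" for \<gamma>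
  proof -
    define q where "q = nat \<lceil>1/c\<rceil>"
    have q1: "1/c \<le> real q" unfolding q_def by linarith
    then have cq: "1 \<le> c * q" using c by (simp add: field_simps)
    have "q \<noteq> 0"
    proof
      assume "q = 0"
      with cq show False by simp
    qed
    then have q: "1 \<le> q" by simp
    show ?thesis
    proof (intro exI allI impI)
      fix n assume n: "2*q+1 \<le> n"
      show "lip_width \<gamma> n (Kset (sig c)) = 0"
        unfolding lip_width_def
      proof (rule cInf_eq_minimum)
        show "0 \<in> {lip_width_k \<gamma> (Kset (sig c)) k N | k N. 1 \<le> k \<and> k \<le> n \<and> is_norm_on_Rk k N}"
          using lwk_zero[OF c q cq, of \<gamma>] g n mnorm_is_norm[of "2*q+1"]
          by (intro CollectI exI[of _ "2*q+1"] exI[of _ "mnorm (2*q+1)"]) auto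
        fix x assume "x \<in> {lip_width_k \<gamma> (Kset (sig c)) k N | k N. 1 \<le> k \<and> k \<le> n \<and> is_norm_on_Rk k N}"
        then show "0 \<le> x" using lwk_nonneg[OF c, of \<gamma>] g by auto
      qed
    qed
  qed
  show ?thesis unfolding sg using p1 p2 by blast
qed


end
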